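(* Let $\mu,\nu,k$ be integers with $0\le k\le \mu<\nu$. Let $J_k^*:\mathcal{H}_{\mu+\nu-2k}\to\mathcal{H}_\mu\otimes\mathcal{H}_\nu$ be the Hilbert space adjoint of $J_k$ and let $1$ denote the constant function in $\mathcal{H}_{\mu+\nu-2k}$. Then $$J_k\big(J_k^*(1)\big)(0)=\frac{k!\,(\mu+\nu-2k+2)_k}{(-\nu)_k\,(-\mu)_k}.$$
   Context: For an integer $\tau\ge 0$, $\mathcal{H}_\tau$ is the space of polynomials in one complex variable of degree at most $\tau$, with inner product $\langle f,g\rangle=\int_{\mathbb{C}} f\,\overline{g}\,d\iota_\tau$, where $d\iota_\tau(z)=\frac{\tau+1}{(1+|z|^2)^{\tau}}\frac{dA(z)}{\pi(1+|z|^2)^2}$ and $dA$ is Lebesgue measure on $\mathbb{C}$. The tensor product $\mathcal{H}_\mu\otimes\mathcal{H}_\nu$ is realized as the space of polynomials $F(z,w)$ of degree $\le\mu$ in $z$ and $\le\nu$ in $w$ with the inner product of $L^2(d\iota_\mu(z)\,d\iota_\nu(w))$. The map $J_k:\mathcal{H}_\mu\otimes\mathcal{H}_\nu\to\mathcal{H}_{\mu+\nu-2k}$ is $$J_k(F)(\xi)=\int_{\mathbb{C}^2}F(z,w)(\overline{z}-\overline{w})^k(1+\xi\overline{z})^{\mu-k}(1+\xi\overline{w})^{\nu-k}\,d\iota_\mu(z)\,d\iota_\nu(w).$$ $(a)_n=a(a+1)\cdots(a+n-1)$ denotes the rising Pochhammer symbol. *)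

theory Defs
  imports "HOL-Analysis.Analysis"
begin

definition iota :: "nat \<Rightarrow> complex measure" where
  "iota \<tau> = density lborel
     (\<lambda>z. ennreal ((real \<tau> + 1) / (pi * (1 + (cmod z)\<^sup>2) ^ (\<tau> + 2))))"

definition Hspace :: "nat \<Rightarrow> (complex \<Rightarrow> complex) set" where
  "Hspace \<tau> = {f. \<exists>c :: nat \<Rightarrow> complex. f = (\<lambda>z. \<Sum>i\<le>\<tau>. c i * z ^ i)}"

definition innerH :: "nat \<Rightarrow> (complex \<Rightarrow> complex) \<Rightarrow> (complex \<Rightarrow> complex) \<Rightarrow> complex" where
  "innerH \<tau> f g = (LINT z | iota \<tau>. f z * cnj (g z))"

text \<open>H_mu tensor H_nu: polynomials F(z,w) of degree at most mu in z and at most nu in w.\<close>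
definition Tspace :: "nat \<Rightarrow> nat \<Rightarrow> (complex \<times> complex \<Rightarrow> complex) set" where
  "Tspace \<mu> \<nu> = {F. \<exists>c :: nat \<Rightarrow> nat \<Rightarrow> complex.
      F = (\<lambda>(z, w). \<Sum>i\<le>\<mu>. \<Sum>j\<le>\<nu>. c i j * z ^ i * w ^ j)}"

definition innerT :: "nat \<Rightarrow> nat \<Rightarrow> (complex \<times> complex \<Rightarrow> complex)
    \<Rightarrow> (complex \<times> complex \<Rightarrow> complex) \<Rightarrow> complex" where
  "innerT \<mu> \<nu> F G = (LINT p | (iota \<mu> \<Otimes>\<^sub>M iota \<nu>). F p * cnj (G p))"

definition Jk :: "nat \<Rightarrow> nat \<Rightarrow> nat \<Rightarrow> (complex \<times> complex \<Rightarrow> complex) \<Rightarrow> complex \<Rightarrow> complex" where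
  "Jk \<mu> \<nu> k F \<xi> = (LINT p | (iota \<mu> \<Otimes>\<^sub>M iota \<nu>).
      F p * (cnj (fst p) - cnj (snd p)) ^ k * (1 + \<xi> * cnj (fst p)) ^ (\<mu> - k)
        * (1 + \<xi> * cnj (snd p)) ^ (\<nu> - k))"

definition Jk_adj :: "nat \<Rightarrow> nat \<Rightarrow> nat \<Rightarrow> (complex \<Rightarrow> complex) \<Rightarrow> complex \<times> complex \<Rightarrow> complex" where
  "Jk_adj \<mu> \<nu> k g = (THE G. G \<in> Tspace \<mu> \<nu> \<and>
      (\<forall>F\<in>Tspace \<mu> \<nu>. innerH (\<mu> + \<nu> - 2 * k) (Jk \<mu> \<nu> k F) g = innerT \<mu> \<nu> F G))"

end

theory Submission
  imports Defs "HOL-Computational_Algebra.Formal_Power_Series"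
begin

lemma measurable_Complex_pair[measurable]:
  "(\<lambda>(x,y). Complex x y) \<in> borel_measurable (lborel \<Otimes>\<^sub>M lborel)"
  unfolding Complex_eq by (simp add: case_prod_beta')

lemma lborel_complex:
  "(lborel :: complex measure) = distr (lborel \<Otimes>\<^sub>M lborel) borel (\<lambda>(x,y). Complex x y)"
proof (rule lborel_eqI)
  fix l u :: complex
  assume le: "\<And>b. b \<in> Basis \<Longrightarrow> l \<bullet> b \<le> u \<bullet> b"
  have "Re l \<le> Re u" "Im l \<le> Im u" using le[of 1] le[of \<i>] by (auto simp: Basis_complex_def)
  have pre: "(\<lambda>(x,y). Complex x y) -` box l u \<inter> space (lborel \<Otimes>\<^sub>M lborel) = {Re l<..<Re u} \<times> {Im l<..<Im u}"
    by (auto simp: box_def Basis_complex_def space_pair_measure)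
  show "emeasure (distr (lborel \<Otimes>\<^sub>M lborel) borel (\<lambda>(x,y). Complex x y)) (box l u) = (\<Prod>b\<in>Basis. (u - l) \<bullet> b)"
    using \<open>Re l \<le> Re u\<close> \<open>Im l \<le> Im u\<close>
    by (simp add: emeasure_distr pre lborel.emeasure_pair_measure_Times Basis_complex_def ennreal_mult)
qed simp

abbreviation "P2 \<equiv> (lborel \<Otimes>\<^sub>M lborel :: (real \<times> real) measure)"

lemma shear1:
  "distr P2 P2 (\<lambda>(x,y). (x + a * y, y)) = P2"
proof (rule measure_eqI)
  fix A assume A: "A \<in> sets (distr P2 P2 (\<lambda>(x,y). (x + a * y, y)))"
  then have A': "A \<in> sets P2" by simp
  have m: "(\<lambda>(x,y). (x + a * y, y)) \<in> P2 \<rightarrow>\<^sub>M P2" by (simp add: case_prod_beta')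
  have "emeasure (distr P2 P2 (\<lambda>(x,y). (x + a * y, y))) A
      = (\<integral>\<^sup>+p. indicator A p \<partial>(distr P2 P2 (\<lambda>(x,y). (x + a * y, y))))"
    using A by (rule nn_integral_indicator[symmetric])
  also have "\<dots> = (\<integral>\<^sup>+p. indicator A ((\<lambda>(x,y). (x + a * y, y)) p) \<partial>P2)"
    using A' by (intro nn_integral_distr[OF m]) simp
  also have "\<dots> = (\<integral>\<^sup>+y. \<integral>\<^sup>+x. indicator A (x + a * y, y) \<partial>lborel \<partial>lborel)"
    using A' m by (subst lborel_pair.nn_integral_snd[symmetric]) auto
  also have "\<dots> = (\<integral>\<^sup>+y. \<integral>\<^sup>+x. indicator A (x, y) \<partial>lborel \<partial>lborel)"
  proof (rule nn_integral_cong)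
    fix y :: real
    have "(\<integral>\<^sup>+x. indicator A (x, y) \<partial>lborel) = ennreal \<bar>1\<bar> * (\<integral>\<^sup>+x. indicator A (a * y + 1 * x, y) \<partial>lborel)"
      using A' by (intro nn_integral_real_affine) auto
    then show "(\<integral>\<^sup>+x. indicator A (x + a * y, y) \<partial>lborel) = (\<integral>\<^sup>+x. indicator A (x, y) \<partial>lborel)"
      by (simp add: add.commute)
  qed
  also have "\<dots> = emeasure P2 A"
    using A' by (subst lborel_pair.nn_integral_snd) auto
  finally show "emeasure (distr P2 P2 (\<lambda>(x,y). (x + a * y, y))) A = emeasure P2 A" .
qed simp

lemma shear2:
  "distr P2 P2 (\<lambda>(x,y). (x, y + b * x)) = P2"
proof (rule measure_eqI)
  fix A assume A: "A \<in> sets (distr P2 P2 (\<lambda>(x,y). (x, y + b * x)))"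
  then have A': "A \<in> sets P2" by simp
  have m: "(\<lambda>(x,y). (x, y + b * x)) \<in> P2 \<rightarrow>\<^sub>M P2" by (simp add: case_prod_beta')
  have "emeasure (distr P2 P2 (\<lambda>(x,y). (x, y + b * x))) A
      = (\<integral>\<^sup>+p. indicator A p \<partial>(distr P2 P2 (\<lambda>(x,y). (x, y + b * x))))"
    using A by (rule nn_integral_indicator[symmetric])
  also have "\<dots> = (\<integral>\<^sup>+p. indicator A ((\<lambda>(x,y). (x, y + b * x)) p) \<partial>P2)"
    using A' by (intro nn_integral_distr[OF m]) simp
  also have "\<dots> = (\<integral>\<^sup>+x. \<integral>\<^sup>+y. indicator A (x, y + b * x) \<partial>lborel \<partial>lborel)"
  proof -
    have "(\<lambda>p. indicator A ((\<lambda>(x,y). (x, y + b * x)) p) :: ennreal) \<in> borel_measurable P2"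
      using A' m by measurable
    from lborel.nn_integral_fst[OF this] show ?thesis by (simp add: case_prod_beta')
  qed
  also have "\<dots> = (\<integral>\<^sup>+x. \<integral>\<^sup>+y. indicator A (x, y) \<partial>lborel \<partial>lborel)"
  proof (rule nn_integral_cong)
    fix x :: real
    have "(\<integral>\<^sup>+y. indicator A (x, y) \<partial>lborel) = ennreal \<bar>1\<bar> * (\<integral>\<^sup>+y. indicator A (x, b * x + 1 * y) \<partial>lborel)"
      using A' by (intro nn_integral_real_affine) auto
    then show "(\<integral>\<^sup>+y. indicator A (x, y + b * x) \<partial>lborel) = (\<integral>\<^sup>+y. indicator A (x, y) \<partial>lborel)"
      by (simp add: add.commute)
  qed
  also have "\<dots> = emeasure P2 A"
    using A' by (subst lborel.nn_integral_fst) auto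
  finally show "emeasure (distr P2 P2 (\<lambda>(x,y). (x, y + b * x))) A = emeasure P2 A" .
qed simp

lemma rot_real:
  fixes c s :: real
  assumes cs: "c\<^sup>2 + s\<^sup>2 = 1" and c: "c \<noteq> -1"
  shows "distr P2 P2 (\<lambda>(x,y). (c*x - s*y, s*x + c*y)) = P2"
proof -
  define t where "t = s / (1 + c)"
  have c1: "1 + c \<noteq> 0" using c by linarith
  have ts: "t * s = 1 - c"
  proof -
    have "t * s = s\<^sup>2 / (1 + c)" by (simp add: t_def power2_eq_square)
    also have "\<dots> = (1 - c) * (1 + c) / (1 + c)" using cs by (simp add: algebra_simps power2_eq_square)
    also have "\<dots> = 1 - c" using c1 by simp
    finally show ?thesis .
  qed
  have tc: "t * (1 + c) = s" using c1 by (simp add: t_def)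
  define S1 where "S1 = (\<lambda>(x::real,y::real). (x + (-t) * y, y))"
  define S2 where "S2 = (\<lambda>(x::real,y::real). (x, y + s * x))"
  have m1: "S1 \<in> P2 \<rightarrow>\<^sub>M P2" unfolding S1_def by (simp add: case_prod_beta')
  have m2: "S2 \<in> P2 \<rightarrow>\<^sub>M P2" unfolding S2_def by (simp add: case_prod_beta')
  have eq: "(\<lambda>(x,y). (c*x - s*y, s*x + c*y)) = S1 \<circ> (S2 \<circ> S1)"
  proof
    fix p :: "real \<times> real"
    obtain x y where p: "p = (x, y)" by (cases p)
    have "x + - t * y + - t * (y + s * (x + - t * y)) = (1 - t * s) * x - (t * (2 - t * s)) * y"
      by (simp add: algebra_simps)
    also have "\<dots> = c * x - (t * (1 + c)) * y" using ts by simp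
    finally have e1: "x + - t * y + - t * (y + s * (x + - t * y)) = c * x - s * y" using tc by simp
    have "y + s * (x + - t * y) = s * x + (1 - t * s) * y" by (simp add: algebra_simps)
    then have e2: "y + s * (x + - t * y) = s * x + c * y" using ts by simp
    show "(\<lambda>(x,y). (c*x - s*y, s*x + c*y)) p = (S1 \<circ> (S2 \<circ> S1)) p"
      unfolding p S1_def S2_def using e1 e2 by simp
  qed
  have "distr P2 P2 (S1 \<circ> (S2 \<circ> S1)) = distr (distr P2 P2 (S2 \<circ> S1)) P2 S1"
    using m1 m2 by (subst distr_distr) auto
  also have "distr P2 P2 (S2 \<circ> S1) = distr (distr P2 P2 S1) P2 S2"
    using m1 m2 by (subst distr_distr) auto
  also have "distr P2 P2 S1 = P2" unfolding S1_def by (rule shear1)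
  also have "distr P2 P2 S2 = P2" unfolding S2_def by (rule shear2)
  also have "distr P2 P2 S1 = P2" unfolding S1_def by (rule shear1)
  finally show ?thesis using eq by (simp add: comp_def)
qed

lemma lborel_complex_rotation:
  fixes u :: complex
  assumes u: "cmod u = 1" "u \<noteq> -1"
  shows "distr lborel borel (\<lambda>z. u * z) = (lborel :: complex measure)"
proof -
  let ?C = "(\<lambda>(x,y). Complex x y)"
  let ?R = "(\<lambda>(x,y). (Re u*x - Im u*y, Im u*x + Re u*y))"
  have cs: "(Re u)\<^sup>2 + (Im u)\<^sup>2 = 1" using u(1) by (simp add: cmod_def)
  have c: "Re u \<noteq> -1"
  proof
    assume "Re u = -1"
    then have "Im u = 0" using cs by (simp add: power2_eq_square)
    then show False using \<open>Re u = -1\<close> u(2) by (simp add: complex_eq_iff)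
  qed
  have mR: "?R \<in> P2 \<rightarrow>\<^sub>M P2" by (simp add: case_prod_beta')
  have "distr lborel borel (\<lambda>z. u * z) = distr (distr P2 borel ?C) borel (\<lambda>z. u * z)"
    by (simp add: lborel_complex[symmetric])
  also have "\<dots> = distr P2 borel ((\<lambda>z. u * z) \<circ> ?C)"
    by (subst distr_distr) auto
  also have "(\<lambda>z. u * z) \<circ> ?C = ?C \<circ> ?R"
    by (auto simp: fun_eq_iff complex_eq_iff algebra_simps)
  also have "distr P2 borel (?C \<circ> ?R) = distr (distr P2 P2 ?R) borel ?C"
    using mR by (subst distr_distr) auto
  also have "distr P2 P2 ?R = P2" by (rule rot_real[OF cs c])
  also have "distr P2 borel ?C = lborel" by (simp add: lborel_complex[symmetric])
  finally show ?thesis .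
qed

lemma emeasure_cball_complex: "r \<ge> 0 \<Longrightarrow> emeasure lborel (cball (0::complex) r) = ennreal (pi * r\<^sup>2)"
  by (simp add: emeasure_cball unit_ball_vol_2 mult.commute)

lemma emeasure_ball_complex: "r \<ge> 0 \<Longrightarrow> emeasure lborel (ball (0::complex) r) = ennreal (pi * r\<^sup>2)"
  by (simp add: emeasure_ball unit_ball_vol_2 mult.commute)

lemma le_sqrt_iff': "r \<ge> 0 \<Longrightarrow> r \<le> sqrt c \<longleftrightarrow> r\<^sup>2 \<le> c"
  by (metis abs_of_nonneg real_sqrt_abs real_sqrt_le_iff)

lemma less_sqrt_iff': "r \<ge> 0 \<Longrightarrow> r < sqrt c \<longleftrightarrow> r\<^sup>2 < c"
  by (metis abs_of_nonneg real_sqrt_abs real_sqrt_less_iff)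

lemma radial_distr:
  "distr (lborel :: complex measure) borel (\<lambda>z. (cmod z)\<^sup>2) = density lborel (\<lambda>t. ennreal pi * indicator {0..} t)"
  (is "?M = ?N")
proof (rule measure_eqI_generator_eq[where E="range (\<lambda>(a,b). {a..b::real})" and \<Omega>=UNIV
      and A="\<lambda>i. {- real i..real i}"])
  show "Int_stable (range (\<lambda>(a, b). {a..b::real}))"
    by (auto simp: Int_stable_def image_def) (metis Int_atLeastAtMost)
  show "range (\<lambda>(a, b). {a..b::real}) \<subseteq> Pow UNIV" by simp
  show "sets ?M = sigma_sets UNIV (range (\<lambda>(a, b). {a..b::real}))"
    by (simp add: borel_eq_atLeastAtMost)
  show "sets ?N = sigma_sets UNIV (range (\<lambda>(a, b). {a..b::real}))"
    by (simp add: borel_eq_atLeastAtMost)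
  show "range (\<lambda>i. {- real i..real i}) \<subseteq> range (\<lambda>(a, b). {a..b::real})" by auto
  show "(\<Union>i. {- real i..real i}) = UNIV"
  proof -
    have "x \<in> (\<Union>i. {- real i..real i})" for x :: real
    proof -
      obtain n :: nat where "\<bar>x\<bar> \<le> n" using real_arch_simple by blast
      then have "x \<in> {- real n..real n}" by auto
      then show ?thesis by blast
    qed
    then show ?thesis by auto
  qed
  have mN: "emeasure ?N {a..b} = ennreal pi * emeasure lborel ({a..b} \<inter> {0..})" for a b :: real
  proof -
    have "emeasure ?N {a..b} = (\<integral>\<^sup>+x. ennreal pi * indicator {0..} x * indicator {a..b} x \<partial>lborel)"
      by (simp add: emeasure_density)
    also have "\<dots> = (\<integral>\<^sup>+x. ennreal pi * indicator ({a..b} \<inter> {0..}) x \<partial>lborel)"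
      by (intro nn_integral_cong) (auto split: split_indicator)
    also have "\<dots> = ennreal pi * emeasure lborel ({a..b} \<inter> {0..})"
      by (intro nn_integral_cmult_indicator) simp
    finally show ?thesis .
  qed
  have main: "emeasure ?M {a..b} = emeasure ?N {a..b}" for a b :: real
  proof -
    have mM: "emeasure ?M {a..b} = emeasure lborel {z::complex. a \<le> (cmod z)\<^sup>2 \<and> (cmod z)\<^sup>2 \<le> b}"
      by (subst emeasure_distr) (auto intro!: arg_cong[where f="emeasure lborel"])
    show ?thesis
    proof (cases "b < 0 \<or> b < a")
      case True
      then have e1: "{z::complex. a \<le> (cmod z)\<^sup>2 \<and> (cmod z)\<^sup>2 \<le> b} = {}"
        by (auto, smt (verit) zero_le_power2)
      have e2: "{a..b} \<inter> {0..} = {}" using True by auto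
      show ?thesis unfolding mN mM e1 e2 by simp
    next
      case False
      then have b: "0 \<le> b" "a \<le> b" by auto
      show ?thesis
      proof (cases "a \<le> 0")
        case True
        have "{z::complex. a \<le> (cmod z)\<^sup>2 \<and> (cmod z)\<^sup>2 \<le> b} = cball 0 (sqrt b)"
          using True b by (auto simp: le_sqrt_iff' intro: order_trans[of _ 0])
        moreover have "{a..b} \<inter> {0..} = {0..b}" using True by auto
        ultimately show ?thesis using mN mM b
          by (simp add: emeasure_cball_complex ennreal_mult')
      next
        case False
        have "{z::complex. a \<le> (cmod z)\<^sup>2 \<and> (cmod z)\<^sup>2 \<le> b} = cball 0 (sqrt b) - ball 0 (sqrt a)"
          using False b by (auto simp: le_sqrt_iff' less_sqrt_iff')
        moreover have "emeasure lborel (cball (0::complex) (sqrt b) - ball 0 (sqrt a))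
            = ennreal (pi * b) - ennreal (pi * a)"
        proof -
          have "ball (0::complex) (sqrt a) \<subseteq> cball 0 (sqrt b)" using False b by (auto simp: subset_iff) (meson less_imp_le order_trans real_sqrt_le_mono)
          then have "emeasure lborel (cball (0::complex) (sqrt b) - ball 0 (sqrt a))
              = emeasure lborel (cball (0::complex) (sqrt b)) - emeasure lborel (ball (0::complex) (sqrt a))"
            by (intro emeasure_Diff) (use emeasure_lborel_ball_finite[of "0::complex" "sqrt a"] in auto)
          then show ?thesis using False b by (simp add: emeasure_cball_complex emeasure_ball_complex)
        qed
        moreover have "{a..b} \<inter> {0..} = {a..b}" using False by auto
        moreover have "ennreal (pi * b) - ennreal (pi * a) = ennreal pi * (ennreal b - ennreal a)"
        proof -
          have "ennreal (pi * b) - ennreal (pi * a) = ennreal (pi * b - pi * a)"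
            using False by (simp add: ennreal_minus)
          also have "\<dots> = ennreal (pi * (b - a))" by (simp add: right_diff_distrib)
          also have "\<dots> = ennreal pi * ennreal (b - a)" using b by (simp add: ennreal_mult)
          also have "ennreal (b - a) = ennreal b - ennreal a" using False by (simp add: ennreal_minus)
          finally show ?thesis .
        qed
        ultimately show ?thesis using mN mM b False
          by (simp add: emeasure_lborel_Icc_eq ennreal_minus)
      qed
    qed
  qed
  show "\<And>X. X \<in> range (\<lambda>(a, b). {a..b}) \<Longrightarrow> emeasure ?M X = emeasure ?N X"
    using main by auto
  show "emeasure ?M {- real i..real i} \<noteq> \<infinity>" for i
  proof -
    have "emeasure ?M {- real i..real i} = ennreal pi * emeasure lborel ({- real i..real i} \<inter> {0..})"
      using main mN by simp
    also have "{- real i..real i} \<inter> {0..} = {0..real i}" by auto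
    finally show ?thesis by (simp add: ennreal_mult[symmetric])
  qed
qed

lemma K_base:
  "(\<integral>\<^sup>+t. ennreal (1 / (1 + t) ^ (s + 2)) * indicator {0..} t \<partial>lborel) = ennreal (1 / (real s + 1))"
proof -
  define F where "F t = - 1 / ((real s + 1) * (1 + t) ^ (s + 1))" for t :: real
  have D: "DERIV F t :> 1 / (1 + t) ^ (s + 2)" if "0 \<le> t" for t
  proof -
    have t: "1 + t \<noteq> 0" using that by simp
    have d1: "DERIV (\<lambda>t. (1 + t) ^ (s + 1)) t :> (real s + 1) * (1 + t) ^ s"
      by (auto intro!: derivative_eq_intros) (cases s, auto simp: algebra_simps)
    have d2: "DERIV (\<lambda>t. inverse ((1 + t) ^ (s + 1))) t :>
        - ((real s + 1) * (1 + t) ^ s * inverse (((1 + t) ^ (s + 1)) ^ Suc (Suc 0)))"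
      by (rule DERIV_inverse_fun[OF d1]) (use t in simp)
    have d3: "DERIV (\<lambda>t. (- 1 / (real s + 1)) * inverse ((1 + t) ^ (s + 1))) t :>
        (- 1 / (real s + 1)) * - ((real s + 1) * (1 + t) ^ s * inverse (((1 + t) ^ (s + 1)) ^ Suc (Suc 0)))"
      by (rule DERIV_cmult[OF d2])
    have eq: "((1 + t) ^ (s + 1)) ^ Suc (Suc 0) = (1 + t) ^ s * (1 + t) ^ (s + 2)"
    proof -
      have "((1 + t) ^ (s + 1)) ^ Suc (Suc 0) = (1 + t) ^ ((s + 1) * Suc (Suc 0))" by (simp only: power_mult)
      also have "(s + 1) * Suc (Suc 0) = s + (s + 2)" by simp
      finally show ?thesis by (simp add: power_add)
    qed
    have "(- 1 / (real s + 1)) * - ((real s + 1) * (1 + t) ^ s * inverse (((1 + t) ^ (s + 1)) ^ Suc (Suc 0)))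
        = 1 / (1 + t) ^ (s + 2)"
    proof -
      have gen: "a \<noteq> 0 \<Longrightarrow> X \<noteq> 0 \<Longrightarrow> Y \<noteq> 0 \<Longrightarrow> (- 1 / a) * - (a * X * inverse (X * Y)) = 1 / Y"
        for a X Y :: real by (simp add: field_simps)
      show ?thesis unfolding eq
        by (rule gen) (use t in auto)
    qed
    moreover have "F = (\<lambda>t. (- 1 / (real s + 1)) * inverse ((1 + t) ^ (s + 1)))"
      by (auto simp: F_def fun_eq_iff field_simps)
    ultimately show ?thesis using d3 by simp
  qed
  have lim: "(F \<longlongrightarrow> 0) at_top"
    unfolding F_def by real_asymp
  have "(\<integral>\<^sup>+t. ennreal (1 / (1 + t) ^ (s + 2)) * indicator {0..} t \<partial>lborel) = ennreal (0 - F 0)"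
    by (rule nn_integral_FTC_atLeast[OF _ D _ lim]) auto
  also have "0 - F 0 = 1 / (real s + 1)" by (simp add: F_def)
  finally show ?thesis .
qed

definition Kint :: "nat \<Rightarrow> nat \<Rightarrow> ennreal" where
  "Kint a s = (\<integral>\<^sup>+t. ennreal (t ^ a / (1 + t) ^ (s + 2)) * indicator {0..} t \<partial>lborel)"

lemma fact_arith:
  fixes a d :: nat
  shows "fact a * fact d / fact (a + d + 1) - fact a * fact (Suc d) / fact (a + d + 2)
       = (fact (Suc a) * fact d / fact (a + d + 2) :: real)"
proof -
  have f: "(fact (a + d + 2) :: real) = real (a + d + 2) * fact (a + d + 1)"
  proof -
    have e: "a + d + 2 = Suc (a + d + 1)" by simp
    show ?thesis unfolding e fact_Suc by simp
  qed
  have pos: "(fact (a + d + 1) :: real) > 0" by simp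
  have gen: "F > 0 \<Longrightarrow> A \<ge> 0 \<Longrightarrow> D \<ge> 0 \<Longrightarrow> n = A + D + 2 \<Longrightarrow> X / F - X * (D + 1) / (n * F) = (A + 1) * X / (n * F)"
    for F n A D X :: real
  proof -
    assume h: "F > 0" "A \<ge> 0" "D \<ge> 0" "n = A + D + 2"
    then have n: "n > 0" by simp
    have "X / F = X * n / (n * F)" using n by simp
    then have "X / F - X * (D + 1) / (n * F) = (X * n - X * (D + 1)) / (n * F)"
      by (simp add: diff_divide_distrib)
    also have "X * n - X * (D + 1) = (A + 1) * X" using h(4) by (simp add: algebra_simps)
    finally show ?thesis .
  qed
  have "fact a * fact d / fact (a + d + 1) - fact a * fact (Suc d) / fact (a + d + 2)
      = (fact a * fact d) / fact (a + d + 1) - (fact a * fact d) * (real d + 1) / (real (a + d + 2) * fact (a + d + 1))"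
    unfolding f by (simp add: fact_Suc mult_ac)
  also have "\<dots> = (real a + 1) * (fact a * fact d) / (real (a + d + 2) * fact (a + d + 1))"
    by (rule gen[OF pos]) auto
  also have "\<dots> = fact (Suc a) * fact d / fact (a + d + 2)"
    unfolding f by (simp add: fact_Suc mult_ac)
  finally show ?thesis .
qed

lemma K_val: "a \<le> s \<Longrightarrow> Kint a s = ennreal (fact a * fact (s - a) / fact (s + 1))"
proof (induction a arbitrary: s)
  case 0
  have "Kint 0 s = ennreal (1 / (real s + 1))" unfolding Kint_def using K_base by simp
  also have "1 / (real s + 1) = fact 0 * fact (s - 0) / fact (s + 1)"
  proof -
    have "(fact (s + 1) :: real) = (real s + 1) * fact s" by (simp add: fact_Suc)
    moreover have "(fact s :: real) > 0" by simp
    ultimately show ?thesis by (simp add: divide_simps)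
  qed
  finally show ?case .
next
  case (Suc a)
  then obtain d where s: "s = Suc a + d" by (metis le_iff_add)
  define s' where "s' = a + d"
  have ss: "s = Suc s'" using s s'_def by simp
  have add: "Kint (Suc a) s + Kint a s = Kint a s'"
  proof -
    have "Kint (Suc a) s + Kint a s = (\<integral>\<^sup>+t. ennreal (t ^ Suc a / (1 + t) ^ (s + 2)) * indicator {0..} t
        + ennreal (t ^ a / (1 + t) ^ (s + 2)) * indicator {0..} t \<partial>lborel)"
      unfolding Kint_def by (subst nn_integral_add) auto
    also have "\<dots> = Kint a s'"
      unfolding Kint_def
    proof (intro nn_integral_cong)
      fix t :: real
      show "ennreal (t ^ Suc a / (1 + t) ^ (s + 2)) * indicator {0..} t
          + ennreal (t ^ a / (1 + t) ^ (s + 2)) * indicator {0..} t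
          = ennreal (t ^ a / (1 + t) ^ (s' + 2)) * indicator {0..} t"
      proof (cases "t \<ge> 0")
        case True
        have e1: "t ^ Suc a / (1 + t) ^ (s + 2) + t ^ a / (1 + t) ^ (s + 2) = t ^ a * (1 + t) / (1 + t) ^ (s + 2)"
          by (simp only: add_divide_distrib[symmetric]) (simp add: algebra_simps)
        have e2: "(1 + t) ^ (s + 2) = (1 + t) ^ (s' + 2) * (1 + t)" by (simp add: ss)
        have e3: "t ^ a * (1 + t) / (1 + t) ^ (s + 2) = t ^ a / (1 + t) ^ (s' + 2)"
          unfolding e2 using True by simp
        have eqr: "t ^ Suc a / (1 + t) ^ (s + 2) + t ^ a / (1 + t) ^ (s + 2) = t ^ a / (1 + t) ^ (s' + 2)"
          using e1 e3 by simp
        have ind: "indicator {0..} t = (1::ennreal)" using True by simp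
        have nn: "0 \<le> t ^ Suc a / (1 + t) ^ (s + 2)" "0 \<le> t ^ a / (1 + t) ^ (s + 2)" using True by simp_all
        show ?thesis unfolding ind mult_1_right ennreal_plus[OF nn, symmetric] eqr ..
      qed simp
    qed
    finally show ?thesis .
  qed
  have IH1: "Kint a s = ennreal (fact a * fact (Suc d) / fact (a + d + 2))"
    using Suc.IH[of s] s by (simp add: Suc_diff_le)
  have IH2: "Kint a s' = ennreal (fact a * fact d / fact (a + d + 1))"
    using Suc.IH[of s'] s'_def by simp
  have "Kint (Suc a) s = Kint a s' - Kint a s"
    using add IH1 by (metis add_diff_cancel_enat ennreal_add_diff_cancel_right ennreal_neq_top)
  also have "\<dots> = ennreal (fact a * fact d / fact (a + d + 1) - fact a * fact (Suc d) / fact (a + d + 2))"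
    unfolding IH1 IH2 by (rule ennreal_minus) simp
  also have "\<dots> = ennreal (fact (Suc a) * fact (s - Suc a) / fact (s + 1))"
  proof -
    have "s - Suc a = d" "s + 1 = a + d + 2" by (simp_all add: s)
    then show ?thesis unfolding fact_arith by simp
  qed
  finally show ?case .
qed

lemma choose_sq_ident:
  assumes "i \<le> k" "k \<le> \<mu>" "k \<le> \<nu>"
  shows "(k choose i)^2 * (\<mu> choose k) * (\<nu> choose k)
    = ((\<mu> choose i) * (\<nu> choose (k - i))) * ((\<mu> - i choose (k - i)) * (\<nu> - k + i choose i))"
proof -
  have 1: "(\<mu> choose k) * (k choose i) = (\<mu> choose i) * ((\<mu> - i) choose (k - i))"
    using assms by (intro choose_mult) auto
  have 2: "(\<nu> choose k) * (k choose (k - i)) = (\<nu> choose (k - i)) * ((\<nu> - (k - i)) choose (k - (k - i)))"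
    using assms by (intro choose_mult) auto
  have 3: "k choose (k - i) = k choose i" using assms by (simp add: binomial_symmetric[symmetric])
  have 4: "\<nu> - (k - i) = \<nu> - k + i" "k - (k - i) = i" using assms by auto
  have "(k choose i)^2 * (\<mu> choose k) * (\<nu> choose k) = ((\<mu> choose k) * (k choose i)) * ((\<nu> choose k) * (k choose (k - i)))"
    by (simp add: 3 power2_eq_square mult_ac)
  also have "\<dots> = ((\<mu> choose i) * ((\<mu> - i) choose (k - i))) * ((\<nu> choose (k - i)) * (\<nu> - k + i choose i))"
    by (simp only: 1 2 4)
  finally show ?thesis by (simp add: mult_ac)
qed

lemma vandermonde_var:
  assumes "k \<le> \<mu>" "k \<le> \<nu>"
  shows "(\<Sum>i\<le>k. (\<mu> - i choose (k - i)) * (\<nu> - k + i choose i)) = (\<mu> + \<nu> - k + 1 choose k)"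
proof -
  define X :: real where "X = - of_nat (\<nu> - k) - 1"
  define Y :: real where "Y = - of_nat (\<mu> - k) - 1"
  have a: "real (\<nu> - k + i choose i) = (-1) ^ i * (X gchoose i)" for i
  proof -
    have "real (\<nu> - k + i choose i) = (of_nat (\<nu> - k + i) gchoose i)" by (simp add: binomial_gbinomial)
    also have "\<dots> = (-1) ^ i * ((of_nat i - of_nat (\<nu> - k + i) - 1) gchoose i)" by (rule gbinomial_negated_upper)
    also have "of_nat i - of_nat (\<nu> - k + i) - 1 = X" by (simp add: X_def)
    finally show ?thesis .
  qed
  have b: "real (\<mu> - i choose (k - i)) = (-1) ^ (k - i) * (Y gchoose (k - i))" if "i \<le> k" for i
  proof -
    have "real (\<mu> - i choose (k - i)) = (of_nat (\<mu> - i) gchoose (k - i))" by (simp add: binomial_gbinomial)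
    also have "\<dots> = (-1) ^ (k - i) * ((of_nat (k - i) - of_nat (\<mu> - i) - 1) gchoose (k - i))" by (rule gbinomial_negated_upper)
    also have "of_nat (k - i) - of_nat (\<mu> - i) - 1 = Y" using that assms by (simp add: Y_def of_nat_diff)
    finally show ?thesis .
  qed
  have "real (\<Sum>i\<le>k. (\<mu> - i choose (k - i)) * (\<nu> - k + i choose i)) = (\<Sum>i\<le>k. (-1) ^ k * ((X gchoose i) * (Y gchoose (k - i))))"
  proof -
    have "real (\<Sum>i\<le>k. (\<mu> - i choose (k - i)) * (\<nu> - k + i choose i)) = (\<Sum>i\<le>k. real (\<mu> - i choose (k - i)) * real (\<nu> - k + i choose i))"
      by simp
    also have "\<dots> = (\<Sum>i\<le>k. (-1) ^ k * ((X gchoose i) * (Y gchoose (k - i))))"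
    proof (intro sum.cong refl)
      fix i assume "i \<in> {..k}"
      then have i: "i \<le> k" by simp
      have pw: "(-1::real) ^ (k - i) * (-1) ^ i = (-1) ^ k" using i by (simp add: power_add[symmetric])
      have "((-1::real) ^ (k - i) * (Y gchoose (k - i))) * ((-1) ^ i * (X gchoose i))
          = ((-1) ^ (k - i) * (-1) ^ i) * ((X gchoose i) * (Y gchoose (k - i)))" by (simp only: mult_ac)
      then show "real (\<mu> - i choose (k - i)) * real (\<nu> - k + i choose i) = (-1) ^ k * ((X gchoose i) * (Y gchoose (k - i)))"
        unfolding a b[OF i] pw .
    qed
    finally show ?thesis .
  qed
  also have "\<dots> = (-1) ^ k * ((X + Y) gchoose k)"
    by (simp add: sum_distrib_left[symmetric] gbinomial_Vandermonde[symmetric] atLeast0AtMost)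
  also have "(X + Y) gchoose k = (-1) ^ k * ((of_nat k - (X + Y) - 1) gchoose k)" by (rule gbinomial_negated_upper)
  also have "of_nat k - (X + Y) - 1 = of_nat (\<mu> + \<nu> - k + 1)" using assms by (simp add: X_def Y_def of_nat_diff)
  also have "(of_nat (\<mu> + \<nu> - k + 1) gchoose k) = real (\<mu> + \<nu> - k + 1 choose k)" by (simp add: binomial_gbinomial)
  finally have "real (\<Sum>i\<le>k. (\<mu> - i choose (k - i)) * (\<nu> - k + i choose i)) = real (\<mu> + \<nu> - k + 1 choose k)"
    by (simp add: power_mult_distrib[symmetric] power_add[symmetric] mult.assoc[symmetric])
  then show ?thesis by (simp only: of_nat_eq_iff)
qed

lemma poch_neg: "pochhammer (- of_nat n :: complex) k = (-1) ^ k * fact k * of_nat (n choose k)"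
proof -
  let ?P = "pochhammer (- of_nat n :: complex) k"
  have e: "(of_nat n :: complex) gchoose k = (-1) ^ k * ?P / fact k" by (rule gbinomial_pochhammer)
  have f: "(fact k :: complex) \<noteq> 0" by simp
  have "(-1) ^ k * fact k * ((of_nat n :: complex) gchoose k) = (-1) ^ k * fact k * ((-1) ^ k * ?P / fact k)"
    by (simp only: e)
  also have "\<dots> = ((-1) ^ k * (-1) ^ k) * ?P" using f by simp
  also have "((-1::complex) ^ k * (-1) ^ k) = 1" by (simp add: power_mult_distrib[symmetric])
  finally show ?thesis by (simp add: binomial_gbinomial)
qed

lemma poch_pos: "m \<ge> 1 \<Longrightarrow> pochhammer (of_nat m :: complex) k = fact k * of_nat (m + k - 1 choose k)"
proof -
  assume m: "m \<ge> 1"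
  have "(of_nat (m + k - 1) :: complex) gchoose k = pochhammer (of_nat (m + k - 1) - of_nat k + 1) k / fact k"
    by (rule gbinomial_pochhammer')
  also have "(of_nat (m + k - 1) :: complex) - of_nat k + 1 = of_nat m" using m by (simp add: of_nat_diff)
  finally have "pochhammer (of_nat m :: complex) k = fact k * ((of_nat (m + k - 1) :: complex) gchoose k)"
    by (simp add: field_simps)
  then show ?thesis by (simp add: binomial_gbinomial)
qed

lemma comb_final:
  assumes "k \<le> \<mu>" "k \<le> \<nu>"
  shows "(\<Sum>i\<le>k. of_nat ((k choose i)^2) / (of_nat (\<mu> choose i) * of_nat (\<nu> choose (k - i))) :: complex)
    = of_nat (fact k) * pochhammer (of_nat (\<mu> + \<nu> - 2 * k + 2)) k
      / (pochhammer (- of_nat \<nu>) k * pochhammer (- of_nat \<mu>) k)"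
proof -
  let ?M = "of_nat (\<mu> choose k) :: complex" and ?V = "of_nat (\<nu> choose k) :: complex"
  have M0: "?M \<noteq> 0" "?V \<noteq> 0" using assms by auto
  have t: "of_nat ((k choose i)^2) / (of_nat (\<mu> choose i) * of_nat (\<nu> choose (k - i)))
      = of_nat ((\<mu> - i choose (k - i)) * (\<nu> - k + i choose i)) / (?M * ?V)" if "i \<le> k" for i
  proof -
    have nz: "(of_nat (\<mu> choose i) :: complex) \<noteq> 0" "(of_nat (\<nu> choose (k - i)) :: complex) \<noteq> 0"
      using that assms by auto
    have "(of_nat ((k choose i)^2 * (\<mu> choose k) * (\<nu> choose k)) :: complex)
      = of_nat (((\<mu> choose i) * (\<nu> choose (k - i))) * ((\<mu> - i choose (k - i)) * (\<nu> - k + i choose i)))"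
      using choose_sq_ident[OF that assms] by simp
    then have "(of_nat ((k choose i)^2) :: complex) * ?M * ?V
      = (of_nat (\<mu> choose i) * of_nat (\<nu> choose (k - i))) * of_nat ((\<mu> - i choose (k - i)) * (\<nu> - k + i choose i))"
      by (simp only: of_nat_mult)
    then show ?thesis using nz M0 by (simp add: field_simps)
  qed
  have "(\<Sum>i\<le>k. of_nat ((k choose i)^2) / (of_nat (\<mu> choose i) * of_nat (\<nu> choose (k - i))) :: complex)
      = (\<Sum>i\<le>k. of_nat ((\<mu> - i choose (k - i)) * (\<nu> - k + i choose i)) / (?M * ?V))"
    by (intro sum.cong refl) (rule t, simp)
  also have "\<dots> = of_nat (\<Sum>i\<le>k. (\<mu> - i choose (k - i)) * (\<nu> - k + i choose i)) / (?M * ?V)"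
    by (simp add: sum_divide_distrib)
  also have "\<dots> = of_nat (\<mu> + \<nu> - k + 1 choose k) / (?M * ?V)"
    using vandermonde_var[OF assms] by simp
  also have "\<dots> = of_nat (fact k) * pochhammer (of_nat (\<mu> + \<nu> - 2 * k + 2)) k
      / (pochhammer (- of_nat \<nu>) k * pochhammer (- of_nat \<mu>) k)"
  proof -
    have e: "\<mu> + \<nu> - 2 * k + 2 + k - 1 = \<mu> + \<nu> - k + 1" using assms by simp
    have p: "pochhammer (of_nat (\<mu> + \<nu> - 2 * k + 2) :: complex) k = fact k * of_nat (\<mu> + \<nu> - k + 1 choose k)"
      using poch_pos[of "\<mu> + \<nu> - 2 * k + 2" k] e by simp
    have f: "(fact k :: complex) \<noteq> 0" by simp
    have s: "((-1::complex) ^ k) * ((-1) ^ k) = 1" by (simp add: power_mult_distrib[symmetric])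
    show ?thesis unfolding p poch_neg using M0 f s
      by (simp add: field_simps)
  qed
  finally show ?thesis .
qed

lemma nn_radial:
  fixes g :: "real \<Rightarrow> ennreal"
  assumes [measurable]: "g \<in> borel_measurable borel"
  shows "(\<integral>\<^sup>+z. g ((cmod z)\<^sup>2) \<partial>(lborel :: complex measure)) = ennreal pi * (\<integral>\<^sup>+t. g t * indicator {0..} t \<partial>lborel)"
proof -
  have "(\<integral>\<^sup>+z. g ((cmod z)\<^sup>2) \<partial>(lborel :: complex measure))
      = (\<integral>\<^sup>+t. g t \<partial>(distr (lborel :: complex measure) borel (\<lambda>z. (cmod z)\<^sup>2)))"
    by (subst nn_integral_distr) auto
  also have "\<dots> = (\<integral>\<^sup>+t. ennreal pi * indicator {0..} t * g t \<partial>lborel)"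
    unfolding radial_distr by (subst nn_integral_density) auto
  also have "\<dots> = ennreal pi * (\<integral>\<^sup>+t. g t * indicator {0..} t \<partial>lborel)"
    by (subst nn_integral_cmult[symmetric]) (auto simp: mult_ac)
  finally show ?thesis .
qed

definition rho :: "nat \<Rightarrow> complex \<Rightarrow> real" where
  "rho \<tau> z = (real \<tau> + 1) / (pi * (1 + (cmod z)\<^sup>2) ^ (\<tau> + 2))"

lemma rho_nonneg: "rho \<tau> z \<ge> 0"
  by (simp add: rho_def)

lemma rho_measurable[measurable]: "rho \<tau> \<in> borel_measurable borel"
  unfolding rho_def by measurable

lemma iota_rho: "iota \<tau> = density lborel (\<lambda>z. ennreal (rho \<tau> z))"
  unfolding iota_def rho_def ..

lemma nn_moment:
  assumes "a \<le> \<tau>"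
  shows "(\<integral>\<^sup>+z. ennreal (rho \<tau> z * (cmod z) ^ (2 * a)) \<partial>lborel) = ennreal (1 / real (\<tau> choose a))"
proof -
  have "(\<integral>\<^sup>+z. ennreal (rho \<tau> z * (cmod z) ^ (2 * a)) \<partial>lborel)
     = (\<integral>\<^sup>+z. (\<lambda>t. ennreal ((real \<tau> + 1) / pi) * ennreal (t ^ a / (1 + t) ^ (\<tau> + 2))) ((cmod z)\<^sup>2) \<partial>lborel)"
  proof (intro nn_integral_cong)
    fix z :: complex
    show "ennreal (rho \<tau> z * cmod z ^ (2 * a)) = (\<lambda>t. ennreal ((real \<tau> + 1) / pi) * ennreal (t ^ a / (1 + t) ^ (\<tau> + 2))) ((cmod z)\<^sup>2)"
    proof -
      have pw: "cmod z ^ (2 * a) = ((cmod z)\<^sup>2) ^ a" by (simp add: power_mult)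
      have "rho \<tau> z * ((cmod z)\<^sup>2) ^ a = ((real \<tau> + 1) / pi) * (((cmod z)\<^sup>2) ^ a / (1 + (cmod z)\<^sup>2) ^ (\<tau> + 2))"
        by (simp add: rho_def)
      then show ?thesis unfolding pw by (simp add: ennreal_mult'[symmetric])
    qed
  qed
  also have "\<dots> = ennreal pi * (\<integral>\<^sup>+t. ennreal ((real \<tau> + 1) / pi) * ennreal (t ^ a / (1 + t) ^ (\<tau> + 2)) * indicator {0..} t \<partial>lborel)"
    by (rule nn_radial) measurable
  also have "\<dots> = ennreal pi * (ennreal ((real \<tau> + 1) / pi) * Kint a \<tau>)"
    unfolding Kint_def by (subst nn_integral_cmult[symmetric]) (auto simp: mult_ac)
  also have "\<dots> = ennreal (pi * ((real \<tau> + 1) / pi) * (fact a * fact (\<tau> - a) / fact (\<tau> + 1)))"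
    using assms by (simp add: K_val ennreal_mult'[symmetric] mult_ac ennreal_mult[symmetric])
  also have "pi * ((real \<tau> + 1) / pi) * (fact a * fact (\<tau> - a) / fact (\<tau> + 1)) = 1 / real (\<tau> choose a)"
  proof -
    have "(fact (\<tau> + 1) :: real) = (real \<tau> + 1) * fact \<tau>" by (simp add: fact_Suc)
    moreover have "real (\<tau> choose a) = fact \<tau> / (fact a * fact (\<tau> - a))"
      using assms by (rule binomial_fact)
    moreover have "(fact a :: real) > 0" "(fact (\<tau> - a) :: real) > 0" "(fact \<tau> :: real) > 0" by simp_all
    moreover have gen: "p > 0 \<Longrightarrow> n > 0 \<Longrightarrow> A > 0 \<Longrightarrow> F = n * G \<Longrightarrow> C = G / A \<Longrightarrow> G > 0
        \<Longrightarrow> p * (n / p) * (A / F) = 1 / C" for p n A F G C :: real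
    proof -
      assume h: "p > 0" "n > 0" "A > 0" "F = n * G" "C = G / A" "G > 0"
      then have "C > 0" by simp
      with h show ?thesis by (simp add: field_simps)
    qed
    ultimately show ?thesis by (intro gen) auto
  qed
  finally show ?thesis .
qed

lemma space_iota[simp]: "space (iota \<tau>) = UNIV"
  by (simp add: iota_def)

lemma sets_iota[simp]: "sets (iota \<tau>) = sets borel"
  by (simp add: iota_def)

lemma iota_total: "emeasure (iota \<tau>) (space (iota \<tau>)) = 1"
proof -
  have "emeasure (iota \<tau>) (space (iota \<tau>)) = (\<integral>\<^sup>+z. ennreal (rho \<tau> z) \<partial>lborel)"
    by (simp add: iota_rho emeasure_density)
  also have "\<dots> = (\<integral>\<^sup>+z. ennreal (rho \<tau> z * (cmod z) ^ (2 * 0)) \<partial>lborel)" by simp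
  also have "\<dots> = 1" by (subst nn_moment) auto
  finally show "emeasure (iota \<tau>) (space (iota \<tau>)) = 1" .
qed

lemma finite_iota: "finite_measure (iota \<tau>)"
  by (rule finite_measureI) (use iota_total[of \<tau>] in simp)

lemma cnj_measurable[measurable]: "cnj \<in> borel_measurable borel"
  by (intro borel_measurable_continuous_onI continuous_intros)

lemma pow_le_bound:
  fixes r :: real
  assumes "r \<ge> 0" "m \<le> 2 * \<tau>"
  shows "r ^ m \<le> (1 + r\<^sup>2) ^ \<tau>"
proof (cases "r \<le> 1")
  case True
  then have "r ^ m \<le> 1" using assms by (simp add: power_le_one)
  also have "1 \<le> (1 + r\<^sup>2) ^ \<tau>" by (simp add: one_le_power)
  finally show ?thesis .
next
  case False
  then have "r ^ m \<le> r ^ (2 * \<tau>)" using assms by (intro power_increasing) auto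
  also have "\<dots> = (r\<^sup>2) ^ \<tau>" by (simp add: power_mult)
  also have "\<dots> \<le> (1 + r\<^sup>2) ^ \<tau>" by (intro power_mono) auto
  finally show ?thesis .
qed

lemma integrable_rho_bound: "integrable lborel (\<lambda>z::complex. rho \<tau> z * (1 + (cmod z)\<^sup>2) ^ \<tau>)"
proof (rule integrableI_nonneg)
  show "(\<lambda>z::complex. rho \<tau> z * (1 + (cmod z)\<^sup>2) ^ \<tau>) \<in> borel_measurable lborel" by measurable
  show "AE z in lborel. 0 \<le> rho \<tau> z * (1 + (cmod z)\<^sup>2) ^ \<tau>" by (simp add: rho_nonneg)
  have "(\<integral>\<^sup>+z. ennreal (rho \<tau> z * (1 + (cmod z)\<^sup>2) ^ \<tau>) \<partial>lborel)
     = (\<integral>\<^sup>+z. (\<lambda>t. ennreal ((real \<tau> + 1) / pi) * ennreal (t ^ 0 / (1 + t) ^ (0 + 2))) ((cmod z)\<^sup>2) \<partial>lborel)"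
  proof (intro nn_integral_cong)
    fix z :: complex
    have "rho \<tau> z * (1 + (cmod z)\<^sup>2) ^ \<tau> = ((real \<tau> + 1) / pi) * (((cmod z)\<^sup>2) ^ 0 / (1 + (cmod z)\<^sup>2) ^ (0 + 2))"
      by (simp add: rho_def power_add)
    then show "ennreal (rho \<tau> z * (1 + (cmod z)\<^sup>2) ^ \<tau>) = (\<lambda>t. ennreal ((real \<tau> + 1) / pi) * ennreal (t ^ 0 / (1 + t) ^ (0 + 2))) ((cmod z)\<^sup>2)"
      by (simp add: ennreal_mult'[symmetric])
  qed
  also have "\<dots> = ennreal pi * (\<integral>\<^sup>+t. ennreal ((real \<tau> + 1) / pi) * ennreal (t ^ 0 / (1 + t) ^ (0 + 2)) * indicator {0..} t \<partial>lborel)"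
    by (rule nn_radial) measurable
  also have "\<dots> = ennreal pi * (ennreal ((real \<tau> + 1) / pi) * Kint 0 0)"
    unfolding Kint_def by (subst nn_integral_cmult[symmetric]) (auto simp: mult_ac)
  also have "\<dots> < \<infinity>" by (simp add: K_val ennreal_mult_less_top)
  finally show "(\<integral>\<^sup>+z. ennreal (rho \<tau> z * (1 + (cmod z)\<^sup>2) ^ \<tau>) \<partial>lborel) < \<infinity>" .
qed

lemma integrable_iota_mono:
  assumes "a + b \<le> 2 * \<tau>"
  shows "integrable (iota \<tau>) (\<lambda>z. z ^ a * cnj z ^ b)"
proof -
  have "integrable lborel (\<lambda>z. rho \<tau> z *\<^sub>R (z ^ a * cnj z ^ b))"
  proof (rule Bochner_Integration.integrable_bound[OF integrable_rho_bound])
    show "(\<lambda>z. rho \<tau> z *\<^sub>R (z ^ a * cnj z ^ b)) \<in> borel_measurable lborel" by measurable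
    show "AE z in lborel. norm (rho \<tau> z *\<^sub>R (z ^ a * cnj z ^ b)) \<le> norm (rho \<tau> z * (1 + (cmod z)\<^sup>2) ^ \<tau>)"
    proof (rule AE_I2)
      fix z :: complex
      have "norm (rho \<tau> z *\<^sub>R (z ^ a * cnj z ^ b)) = rho \<tau> z * cmod z ^ (a + b)"
        by (simp add: rho_nonneg norm_mult norm_power power_add)
      also have "\<dots> \<le> rho \<tau> z * (1 + (cmod z)\<^sup>2) ^ \<tau>"
        using assms by (intro mult_left_mono pow_le_bound rho_nonneg) auto
      also have "\<dots> = norm (rho \<tau> z * (1 + (cmod z)\<^sup>2) ^ \<tau>)" by (simp add: rho_nonneg)
      finally show "norm (rho \<tau> z *\<^sub>R (z ^ a * cnj z ^ b)) \<le> norm (rho \<tau> z * (1 + (cmod z)\<^sup>2) ^ \<tau>)" .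
    qed
  qed
  then show ?thesis unfolding iota_rho
    by (subst integrable_density) (auto simp: rho_nonneg)
qed

lemma integral_iota:
  fixes f :: "complex \<Rightarrow> complex"
  assumes [measurable]: "f \<in> borel_measurable borel"
  shows "integral\<^sup>L (iota \<tau>) f = integral\<^sup>L lborel (\<lambda>z. rho \<tau> z *\<^sub>R f z)"
  unfolding iota_rho by (subst integral_density) (auto simp: rho_nonneg)

lemma moment_diag:
  assumes "a \<le> \<tau>"
  shows "(LINT z|iota \<tau>. z ^ a * cnj z ^ a) = 1 / of_nat (\<tau> choose a)"
proof -
  have e: "rho \<tau> z *\<^sub>R (z ^ a * cnj z ^ a) = complex_of_real (rho \<tau> z * (cmod z) ^ (2 * a))" for z
  proof -
    have "z ^ a * cnj z ^ a = (z * cnj z) ^ a" by (simp add: power_mult_distrib)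
    also have "\<dots> = complex_of_real ((cmod z) ^ (2 * a))"
      by (simp flip: complex_norm_square add: power_mult)
    finally show ?thesis by (simp add: scaleR_conv_of_real)
  qed
  have "(LINT z|iota \<tau>. z ^ a * cnj z ^ a) = (LINT z|lborel. rho \<tau> z *\<^sub>R (z ^ a * cnj z ^ a))"
    by (rule integral_iota) measurable
  also have "\<dots> = (LINT z|lborel. complex_of_real (rho \<tau> z * (cmod z) ^ (2 * a)))"
    by (simp only: e)
  also have "\<dots> = complex_of_real (LINT z|lborel. rho \<tau> z * (cmod z) ^ (2 * a))"
    by (rule integral_complex_of_real)
  also have "(LINT z|lborel. rho \<tau> z * (cmod z) ^ (2 * a)) = enn2real (\<integral>\<^sup>+z. ennreal (rho \<tau> z * (cmod z) ^ (2 * a)) \<partial>lborel)"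
    by (rule integral_eq_nn_integral) (auto simp: rho_nonneg)
  also have "\<dots> = 1 / real (\<tau> choose a)" using assms by (simp add: nn_moment)
  finally show ?thesis by simp
qed

lemma exists_rot:
  assumes "a \<noteq> b"
  shows "\<exists>u::complex. cmod u = 1 \<and> u \<noteq> -1 \<and> u ^ a * cnj u ^ b \<noteq> 1"
proof -
  define d where "d = (if b < a then a - b else b - a)"
  have d: "d \<ge> 1" using assms by (auto simp: d_def)
  define u where "u = cis (pi / (2 * real d))"
  have u1: "cmod u = 1" by (simp add: u_def)
  have "0 \<le> cos (pi / (2 * real d))"
  proof (rule cos_ge_zero)
    have "0 < pi / (2 * real d)" using d by simp
    moreover have "0 < pi / 2" by simp
    ultimately show "- (pi / 2) \<le> pi / (2 * real d)" by linarith
    show "pi / (2 * real d) \<le> pi / 2" using d by (intro divide_left_mono) auto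
  qed
  then have um: "u \<noteq> -1" by (auto simp: u_def complex_eq_iff)
  have ucu: "u * cnj u = 1" by (simp add: u_def cis_cnj cis_mult)
  have ud: "u ^ d = \<i>"
  proof -
    have "u ^ d = cis (real d * (pi / (2 * real d)))" unfolding u_def by (rule Complex.DeMoivre)
    also have "real d * (pi / (2 * real d)) = pi / 2" using d by (simp add: field_simps)
    also have "cis (pi / 2) = \<i>" by (simp add: complex_eq_iff)
    finally show ?thesis .
  qed
  have "u ^ a * cnj u ^ b \<noteq> 1"
  proof (cases "b < a")
    case True
    then have "a = b + d" by (simp add: d_def)
    then have "u ^ a * cnj u ^ b = (u * cnj u) ^ b * u ^ d" by (simp add: power_add power_mult_distrib)
    then show ?thesis by (simp add: ucu ud)
  next
    case False
    then have "b = a + d" using assms by (simp add: d_def)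
    then have "u ^ a * cnj u ^ b = (u * cnj u) ^ a * cnj (u ^ d)" by (simp add: power_add power_mult_distrib)
    then show ?thesis by (simp add: ucu ud complex_eq_iff)
  qed
  then show ?thesis using u1 um by blast
qed

lemma moment_offdiag:
  assumes "a \<noteq> b"
  shows "(LINT z|iota \<tau>. z ^ a * cnj z ^ b) = 0"
proof -
  obtain u :: complex where u: "cmod u = 1" "u \<noteq> -1" and c: "u ^ a * cnj u ^ b \<noteq> 1"
    using exists_rot[OF assms] by blast
  define f where "f z = rho \<tau> z *\<^sub>R (z ^ a * cnj z ^ b)" for z
  have fm[measurable]: "f \<in> borel_measurable borel" unfolding f_def by measurable
  have I: "(LINT z|iota \<tau>. z ^ a * cnj z ^ b) = integral\<^sup>L lborel f"
    unfolding f_def by (rule integral_iota) measurable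
  have fu: "f (u * z) = (u ^ a * cnj u ^ b) * f z" for z
    using u by (simp add: f_def rho_def norm_mult power_mult_distrib scaleR_conv_of_real mult_ac)
  have "integral\<^sup>L lborel f = integral\<^sup>L (distr lborel borel (\<lambda>z. u * z)) f"
    by (simp add: lborel_complex_rotation[OF u])
  also have "\<dots> = (LINT z|lborel. f (u * z))"
    by (rule integral_distr) auto
  also have "\<dots> = (u ^ a * cnj u ^ b) * integral\<^sup>L lborel f"
    by (simp add: fu)
  finally have "(1 - u ^ a * cnj u ^ b) * integral\<^sup>L lborel f = 0" by (simp add: algebra_simps)
  then show ?thesis using c I by simp
qed

lemma sigma_iota: "sigma_finite_measure (iota \<tau>)"
  using finite_iota[of \<tau>] by (simp add: finite_measure_def)

lemma pair_iota: "pair_sigma_finite (iota \<mu>) (iota \<nu>)"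
  unfolding pair_sigma_finite_def using sigma_iota by blast

lemma prod_integrable:
  fixes f g :: "complex \<Rightarrow> complex"
  assumes f: "integrable (iota \<mu>) f" and g: "integrable (iota \<nu>) g"
  shows "integrable (iota \<mu> \<Otimes>\<^sub>M iota \<nu>) (\<lambda>p. f (fst p) * g (snd p))"
    and "(LINT p|(iota \<mu> \<Otimes>\<^sub>M iota \<nu>). f (fst p) * g (snd p)) = (LINT z|iota \<mu>. f z) * (LINT w|iota \<nu>. g w)"
proof -
  interpret p: pair_sigma_finite "iota \<mu>" "iota \<nu>" by (rule pair_iota)
  have [measurable]: "f \<in> borel_measurable (iota \<mu>)" "g \<in> borel_measurable (iota \<nu>)"
    using f g by (auto dest: borel_measurable_integrable)
  show I: "integrable (iota \<mu> \<Otimes>\<^sub>M iota \<nu>) (\<lambda>p. f (fst p) * g (snd p))"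
  proof (rule p.Fubini_integrable)
    show "(\<lambda>p. f (fst p) * g (snd p)) \<in> borel_measurable (iota \<mu> \<Otimes>\<^sub>M iota \<nu>)" by measurable
    show "integrable (iota \<mu>) (\<lambda>x. LINT y|iota \<nu>. norm (f (fst (x, y)) * g (snd (x, y))))"
      using f g by (simp add: norm_mult)
    show "AE x in iota \<mu>. integrable (iota \<nu>) (\<lambda>y. f (fst (x, y)) * g (snd (x, y)))"
      using g by simp
  qed
  have "(LINT p|(iota \<mu> \<Otimes>\<^sub>M iota \<nu>). f (fst p) * g (snd p)) = (LINT x|iota \<mu>. LINT y|iota \<nu>. f x * g y)"
    using p.integral_fst'[OF I] by simp
  also have "\<dots> = (LINT x|iota \<mu>. f x * (LINT y|iota \<nu>. g y))" by simp
  also have "\<dots> = (LINT z|iota \<mu>. f z) * (LINT w|iota \<nu>. g w)" by simp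
  finally show "(LINT p|(iota \<mu> \<Otimes>\<^sub>M iota \<nu>). f (fst p) * g (snd p)) = (LINT z|iota \<mu>. f z) * (LINT w|iota \<nu>. g w)" .
qed

definition mom :: "nat \<Rightarrow> nat \<Rightarrow> nat \<Rightarrow> complex" where
  "mom \<tau> a b = (if a = b then 1 / of_nat (\<tau> choose a) else 0)"

lemma moment: "a + b \<le> 2 * \<tau> \<Longrightarrow> (LINT z|iota \<tau>. z ^ a * cnj z ^ b) = mom \<tau> a b"
  by (auto simp: mom_def moment_diag moment_offdiag)

abbreviation PP :: "nat \<Rightarrow> nat \<Rightarrow> (complex \<times> complex) measure" where
  "PP \<mu> \<nu> \<equiv> iota \<mu> \<Otimes>\<^sub>M iota \<nu>"

lemma mono2:
  assumes "a + b \<le> 2 * \<mu>" "c + d \<le> 2 * \<nu>"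
  shows "integrable (PP \<mu> \<nu>) (\<lambda>p. fst p ^ a * cnj (fst p) ^ b * (snd p ^ c * cnj (snd p) ^ d))"
    and "(LINT p|PP \<mu> \<nu>. fst p ^ a * cnj (fst p) ^ b * (snd p ^ c * cnj (snd p) ^ d)) = mom \<mu> a b * mom \<nu> c d"
  using prod_integrable[OF integrable_iota_mono[OF assms(1)] integrable_iota_mono[OF assms(2)]]
  by (simp_all add: moment assms)

lemma mono2i:
  assumes "i \<le> \<mu>" "i' \<le> \<mu>" "j \<le> \<nu>" "j' \<le> \<nu>"
  shows "integrable (PP \<mu> \<nu>) (\<lambda>p. fst p ^ i * cnj (fst p) ^ i' * (snd p ^ j * cnj (snd p) ^ j'))"
    and "(LINT p|PP \<mu> \<nu>. fst p ^ i * cnj (fst p) ^ i' * (snd p ^ j * cnj (snd p) ^ j')) = mom \<mu> i i' * mom \<nu> j j'"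
  using mono2[of i i' \<mu> j j' \<nu>] assms by auto

lemma int_sum2:
  fixes T :: "'i \<Rightarrow> 'j \<Rightarrow> 'a \<Rightarrow> complex"
  assumes "finite A" "finite B" "\<And>i j. i \<in> A \<Longrightarrow> j \<in> B \<Longrightarrow> integrable M (T i j)"
  shows "integrable M (\<lambda>p. \<Sum>i\<in>A. \<Sum>j\<in>B. T i j p)"
    "integral\<^sup>L M (\<lambda>p. \<Sum>i\<in>A. \<Sum>j\<in>B. T i j p) = (\<Sum>i\<in>A. \<Sum>j\<in>B. integral\<^sup>L M (T i j))"
proof -
  have I: "integrable M (\<lambda>p. \<Sum>j\<in>B. T i j p)" if "i \<in> A" for i
    using assms that by (intro Bochner_Integration.integrable_sum) auto
  show "integrable M (\<lambda>p. \<Sum>i\<in>A. \<Sum>j\<in>B. T i j p)"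
    using I assms by (intro Bochner_Integration.integrable_sum) auto
  have "integral\<^sup>L M (\<lambda>p. \<Sum>i\<in>A. \<Sum>j\<in>B. T i j p) = (\<Sum>i\<in>A. integral\<^sup>L M (\<lambda>p. \<Sum>j\<in>B. T i j p))"
    using I by (intro Bochner_Integration.integral_sum) auto
  also have "\<dots> = (\<Sum>i\<in>A. \<Sum>j\<in>B. integral\<^sup>L M (T i j))"
    using assms by (intro sum.cong refl Bochner_Integration.integral_sum) auto
  finally show "integral\<^sup>L M (\<lambda>p. \<Sum>i\<in>A. \<Sum>j\<in>B. T i j p) = (\<Sum>i\<in>A. \<Sum>j\<in>B. integral\<^sup>L M (T i j))" .
qed

lemma int_sum4:
  fixes T :: "'i \<Rightarrow> 'j \<Rightarrow> 'k \<Rightarrow> 'l \<Rightarrow> 'a \<Rightarrow> complex"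
  assumes "finite A" "finite B" "finite C" "finite D"
    "\<And>i j k l. i \<in> A \<Longrightarrow> j \<in> B \<Longrightarrow> k \<in> C \<Longrightarrow> l \<in> D \<Longrightarrow> integrable M (T i j k l)"
  shows "integrable M (\<lambda>p. \<Sum>i\<in>A. \<Sum>j\<in>B. \<Sum>k\<in>C. \<Sum>l\<in>D. T i j k l p)"
    "integral\<^sup>L M (\<lambda>p. \<Sum>i\<in>A. \<Sum>j\<in>B. \<Sum>k\<in>C. \<Sum>l\<in>D. T i j k l p)
      = (\<Sum>i\<in>A. \<Sum>j\<in>B. \<Sum>k\<in>C. \<Sum>l\<in>D. integral\<^sup>L M (T i j k l))"
proof -
  have I: "integrable M (\<lambda>p. \<Sum>k\<in>C. \<Sum>l\<in>D. T i j k l p)" if "i \<in> A" "j \<in> B" for i j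
    using assms that by (intro int_sum2) auto
  show "integrable M (\<lambda>p. \<Sum>i\<in>A. \<Sum>j\<in>B. \<Sum>k\<in>C. \<Sum>l\<in>D. T i j k l p)"
    using I assms by (intro int_sum2) auto
  have "integral\<^sup>L M (\<lambda>p. \<Sum>i\<in>A. \<Sum>j\<in>B. \<Sum>k\<in>C. \<Sum>l\<in>D. T i j k l p)
      = (\<Sum>i\<in>A. \<Sum>j\<in>B. integral\<^sup>L M (\<lambda>p. \<Sum>k\<in>C. \<Sum>l\<in>D. T i j k l p))"
    using I assms by (intro int_sum2) auto
  also have "\<dots> = (\<Sum>i\<in>A. \<Sum>j\<in>B. \<Sum>k\<in>C. \<Sum>l\<in>D. integral\<^sup>L M (T i j k l))"
    using assms by (intro sum.cong refl int_sum2) auto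
  finally show "integral\<^sup>L M (\<lambda>p. \<Sum>i\<in>A. \<Sum>j\<in>B. \<Sum>k\<in>C. \<Sum>l\<in>D. T i j k l p)
      = (\<Sum>i\<in>A. \<Sum>j\<in>B. \<Sum>k\<in>C. \<Sum>l\<in>D. integral\<^sup>L M (T i j k l))" .
qed

lemma sum_mom: "i \<le> \<mu> \<Longrightarrow> (\<Sum>i'\<le>\<mu>. mom \<mu> i i' * f i') = mom \<mu> i i * f i"
proof -
  assume i: "i \<le> \<mu>"
  have "(\<Sum>i'\<le>\<mu>. mom \<mu> i i' * f i') = (\<Sum>i'\<le>\<mu>. if i = i' then mom \<mu> i i * f i else 0)"
    by (intro sum.cong refl) (auto simp: mom_def)
  also have "\<dots> = mom \<mu> i i * f i" using i by (simp add: sum.delta)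
  finally show ?thesis .
qed

lemma parseval:
  fixes c d :: "nat \<Rightarrow> nat \<Rightarrow> complex"
  shows "innerT \<mu> \<nu> (\<lambda>(z, w). \<Sum>i\<le>\<mu>. \<Sum>j\<le>\<nu>. c i j * z ^ i * w ^ j) (\<lambda>(z, w). \<Sum>i\<le>\<mu>. \<Sum>j\<le>\<nu>. d i j * z ^ i * w ^ j)
     = (\<Sum>i\<le>\<mu>. \<Sum>j\<le>\<nu>. c i j * cnj (d i j) * mom \<mu> i i * mom \<nu> j j)"
proof -
  let ?m = "\<lambda>i j i' j' (p::complex\<times>complex). fst p ^ i * cnj (fst p) ^ i' * (snd p ^ j * cnj (snd p) ^ j')"
  have pw: "(\<lambda>(z, w). \<Sum>i\<le>\<mu>. \<Sum>j\<le>\<nu>. c i j * z ^ i * w ^ j) p * cnj ((\<lambda>(z, w). \<Sum>i\<le>\<mu>. \<Sum>j\<le>\<nu>. d i j * z ^ i * w ^ j) p)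
      = (\<Sum>i\<le>\<mu>. \<Sum>j\<le>\<nu>. \<Sum>i'\<le>\<mu>. \<Sum>j'\<le>\<nu>. (c i j * cnj (d i' j')) * ?m i j i' j' p)" for p
    by (cases p) (simp only: prod.case cnj_sum complex_cnj_mult complex_cnj_power sum_distrib_right,
        simp only: sum_distrib_left, simp add: mult_ac)
  have "innerT \<mu> \<nu> (\<lambda>(z, w). \<Sum>i\<le>\<mu>. \<Sum>j\<le>\<nu>. c i j * z ^ i * w ^ j) (\<lambda>(z, w). \<Sum>i\<le>\<mu>. \<Sum>j\<le>\<nu>. d i j * z ^ i * w ^ j)
      = (LINT p|PP \<mu> \<nu>. (\<Sum>i\<le>\<mu>. \<Sum>j\<le>\<nu>. \<Sum>i'\<le>\<mu>. \<Sum>j'\<le>\<nu>. (c i j * cnj (d i' j')) * ?m i j i' j' p))"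
    unfolding innerT_def pw ..
  also have "\<dots> = (\<Sum>i\<le>\<mu>. \<Sum>j\<le>\<nu>. \<Sum>i'\<le>\<mu>. \<Sum>j'\<le>\<nu>. (c i j * cnj (d i' j')) * (mom \<mu> i i' * mom \<nu> j j'))"
    by (subst int_sum4) (auto simp: mono2i)
  also have "\<dots> = (\<Sum>i\<le>\<mu>. \<Sum>j\<le>\<nu>. c i j * cnj (d i j) * mom \<mu> i i * mom \<nu> j j)"
  proof -
    have "(\<Sum>i\<le>\<mu>. \<Sum>j\<le>\<nu>. \<Sum>i'\<le>\<mu>. \<Sum>j'\<le>\<nu>. (c i j * cnj (d i' j')) * (mom \<mu> i i' * mom \<nu> j j'))
      = (\<Sum>i\<le>\<mu>. \<Sum>j\<le>\<nu>. \<Sum>i'\<le>\<mu>. (c i j * mom \<mu> i i') * (\<Sum>j'\<le>\<nu>. mom \<nu> j j' * cnj (d i' j')))"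
      by (simp add: sum_distrib_left mult_ac)
    also have "\<dots> = (\<Sum>i\<le>\<mu>. \<Sum>j\<le>\<nu>. \<Sum>i'\<le>\<mu>. (c i j * mom \<mu> i i') * (mom \<nu> j j * cnj (d i' j)))"
      by (intro sum.cong refl) (simp add: sum_mom)
    also have "\<dots> = (\<Sum>i\<le>\<mu>. \<Sum>j\<le>\<nu>. c i j * (\<Sum>i'\<le>\<mu>. mom \<mu> i i' * (mom \<nu> j j * cnj (d i' j))))"
      by (simp add: sum_distrib_left mult_ac)
    also have "\<dots> = (\<Sum>i\<le>\<mu>. \<Sum>j\<le>\<nu>. c i j * (mom \<mu> i i * (mom \<nu> j j * cnj (d i j))))"
      by (intro sum.cong refl) (simp add: sum_mom)
    finally show ?thesis by (simp add: mult_ac)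
  qed
  finally show ?thesis .
qed

lemma binomD: "(a - b) ^ k = (\<Sum>r\<le>k. of_nat (k choose r) * (-1) ^ (k - r) * (a ^ r * b ^ (k - r)))" for a b :: complex
proof -
  have "(a - b) ^ k = (a + (-b)) ^ k" by simp
  also have "\<dots> = (\<Sum>r\<le>k. of_nat (k choose r) * a ^ r * (-b) ^ (k - r))" by (rule binomial_ring)
  also have "\<dots> = (\<Sum>r\<le>k. of_nat (k choose r) * (-1) ^ (k - r) * (a ^ r * b ^ (k - r)))"
    by (intro sum.cong refl) (simp only: power_minus[of b] mult_ac)
  finally show ?thesis .
qed
lemma binom1: "(1 + x) ^ n = (\<Sum>p\<le>n. of_nat (n choose p) * x ^ p)" for x :: complex
  using binomial_ring[of x 1 n] by (simp add: add.commute)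

lemma H_expand:
  fixes c :: "nat \<Rightarrow> nat \<Rightarrow> complex"
  shows "(\<lambda>(z, w). \<Sum>i\<le>\<mu>. \<Sum>j\<le>\<nu>. c i j * z ^ i * w ^ j) pt * (cnj (fst pt) - cnj (snd pt)) ^ k
      * cnj (fst pt) ^ p * cnj (snd pt) ^ q
    = (\<Sum>i\<le>\<mu>. \<Sum>j\<le>\<nu>. \<Sum>r\<le>k. (c i j * of_nat (k choose r) * (-1) ^ (k - r)) *
        (fst pt ^ i * cnj (fst pt) ^ (r + p) * (snd pt ^ j * cnj (snd pt) ^ (k - r + q))))"
proof -
  obtain z w where pt: "pt = (z, w)" by (cases pt)
  have "(\<Sum>i\<le>\<mu>. \<Sum>j\<le>\<nu>. c i j * z ^ i * w ^ j) * (cnj z - cnj w) ^ k * cnj z ^ p * cnj w ^ q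
      = (\<Sum>i\<le>\<mu>. \<Sum>j\<le>\<nu>. \<Sum>r\<le>k. (c i j * z ^ i * w ^ j) *
          (of_nat (k choose r) * (-1) ^ (k - r) * (cnj z ^ r * cnj w ^ (k - r))) * cnj z ^ p * cnj w ^ q)"
    unfolding binomD by (simp only: sum_distrib_right, simp only: sum_distrib_left, simp only: sum_distrib_right)
  also have "\<dots> = (\<Sum>i\<le>\<mu>. \<Sum>j\<le>\<nu>. \<Sum>r\<le>k. (c i j * of_nat (k choose r) * (-1) ^ (k - r)) *
        (z ^ i * cnj z ^ (r + p) * (w ^ j * cnj w ^ (k - r + q))))"
    by (intro sum.cong refl) (simp only: power_add mult_ac)
  finally show ?thesis by (simp add: pt)
qed

lemma H_integrable:
  fixes c :: "nat \<Rightarrow> nat \<Rightarrow> complex"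
  assumes "k \<le> \<mu>" "k \<le> \<nu>" "p \<le> \<mu> - k" "q \<le> \<nu> - k"
  shows "integrable (PP \<mu> \<nu>) (\<lambda>pt. (\<lambda>(z, w). \<Sum>i\<le>\<mu>. \<Sum>j\<le>\<nu>. c i j * z ^ i * w ^ j) pt * (cnj (fst pt) - cnj (snd pt)) ^ k
      * cnj (fst pt) ^ p * cnj (snd pt) ^ q)"
  unfolding H_expand
proof (intro Bochner_Integration.integrable_sum integrable_mult_right)
  fix i j r assume "i \<in> {..\<mu>}" "j \<in> {..\<nu>}" "r \<in> {..k}"
  then show "integrable (PP \<mu> \<nu>) (\<lambda>pt. fst pt ^ i * cnj (fst pt) ^ (r + p) * (snd pt ^ j * cnj (snd pt) ^ (k - r + q)))"
    using assms by (intro mono2) auto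
qed

definition Acoef :: "nat \<Rightarrow> nat \<Rightarrow> nat \<Rightarrow> (complex \<times> complex \<Rightarrow> complex) \<Rightarrow> nat \<Rightarrow> nat \<Rightarrow> complex" where
  "Acoef \<mu> \<nu> k F p q = (LINT pt|PP \<mu> \<nu>. F pt * (cnj (fst pt) - cnj (snd pt)) ^ k * cnj (fst pt) ^ p * cnj (snd pt) ^ q)"

lemma Jk_expand:
  fixes c :: "nat \<Rightarrow> nat \<Rightarrow> complex"
  assumes "k \<le> \<mu>" "k \<le> \<nu>" and F: "F = (\<lambda>(z, w). \<Sum>i\<le>\<mu>. \<Sum>j\<le>\<nu>. c i j * z ^ i * w ^ j)"
  shows "Jk \<mu> \<nu> k F \<xi> = (\<Sum>p\<le>\<mu> - k. \<Sum>q\<le>\<nu> - k.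
     (of_nat (\<mu> - k choose p) * of_nat (\<nu> - k choose q) * Acoef \<mu> \<nu> k F p q) * \<xi> ^ (p + q))"
proof -
  let ?H = "\<lambda>p q pt. F pt * (cnj (fst pt) - cnj (snd pt)) ^ k * cnj (fst pt) ^ p * cnj (snd pt) ^ q"
  have pw: "F pt * (cnj (fst pt) - cnj (snd pt)) ^ k * (1 + \<xi> * cnj (fst pt)) ^ (\<mu> - k) * (1 + \<xi> * cnj (snd pt)) ^ (\<nu> - k)
     = (\<Sum>p\<le>\<mu> - k. \<Sum>q\<le>\<nu> - k. (of_nat (\<mu> - k choose p) * of_nat (\<nu> - k choose q) * \<xi> ^ (p + q)) * ?H p q pt)" for pt
  proof -
    have "F pt * (cnj (fst pt) - cnj (snd pt)) ^ k * (1 + \<xi> * cnj (fst pt)) ^ (\<mu> - k) * (1 + \<xi> * cnj (snd pt)) ^ (\<nu> - k)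
      = (\<Sum>p\<le>\<mu> - k. \<Sum>q\<le>\<nu> - k. F pt * (cnj (fst pt) - cnj (snd pt)) ^ k *
          (of_nat (\<mu> - k choose p) * (\<xi> * cnj (fst pt)) ^ p) * (of_nat (\<nu> - k choose q) * (\<xi> * cnj (snd pt)) ^ q))"
      unfolding binom1 by (simp only: sum_distrib_left sum_distrib_right) (rule sum.swap)
    also have "\<dots> = (\<Sum>p\<le>\<mu> - k. \<Sum>q\<le>\<nu> - k. (of_nat (\<mu> - k choose p) * of_nat (\<nu> - k choose q) * \<xi> ^ (p + q)) * ?H p q pt)"
      by (intro sum.cong refl) (simp only: power_add power_mult_distrib mult_ac)
    finally show ?thesis .
  qed
  have "Jk \<mu> \<nu> k F \<xi> = (LINT pt|PP \<mu> \<nu>. (\<Sum>p\<le>\<mu> - k. \<Sum>q\<le>\<nu> - k.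
      (of_nat (\<mu> - k choose p) * of_nat (\<nu> - k choose q) * \<xi> ^ (p + q)) * ?H p q pt))"
    unfolding Jk_def pw ..
  also have "\<dots> = (\<Sum>p\<le>\<mu> - k. \<Sum>q\<le>\<nu> - k. LINT pt|PP \<mu> \<nu>.
      (of_nat (\<mu> - k choose p) * of_nat (\<nu> - k choose q) * \<xi> ^ (p + q)) * ?H p q pt)"
    using assms unfolding F by (intro int_sum2 integrable_mult_right H_integrable) auto
  also have "\<dots> = (\<Sum>p\<le>\<mu> - k. \<Sum>q\<le>\<nu> - k.
     (of_nat (\<mu> - k choose p) * of_nat (\<nu> - k choose q) * Acoef \<mu> \<nu> k F p q) * \<xi> ^ (p + q))"
    by (intro sum.cong refl) (subst integral_mult_right_zero, simp add: Acoef_def mult_ac)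
  finally show ?thesis .
qed

lemma innerH_Jk:
  fixes c :: "nat \<Rightarrow> nat \<Rightarrow> complex"
  assumes "k \<le> \<mu>" "k \<le> \<nu>" and F: "F = (\<lambda>(z, w). \<Sum>i\<le>\<mu>. \<Sum>j\<le>\<nu>. c i j * z ^ i * w ^ j)"
  shows "innerH (\<mu> + \<nu> - 2 * k) (Jk \<mu> \<nu> k F) (\<lambda>_. 1) = Acoef \<mu> \<nu> k F 0 0"
proof -
  let ?N = "\<mu> + \<nu> - 2 * k"
  let ?b = "\<lambda>p q. of_nat (\<mu> - k choose p) * of_nat (\<nu> - k choose q) * Acoef \<mu> \<nu> k F p q"
  have "innerH ?N (Jk \<mu> \<nu> k F) (\<lambda>_. 1) = (LINT \<xi>|iota ?N. (\<Sum>p\<le>\<mu> - k. \<Sum>q\<le>\<nu> - k. ?b p q * \<xi> ^ (p + q)))"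
    unfolding innerH_def Jk_expand[OF assms] by simp
  also have "\<dots> = (\<Sum>p\<le>\<mu> - k. \<Sum>q\<le>\<nu> - k. (LINT \<xi>|iota ?N. ?b p q * \<xi> ^ (p + q)))"
  proof (intro int_sum2 integrable_mult_right)
    fix p q assume "p \<in> {..\<mu> - k}" "q \<in> {..\<nu> - k}"
    then have "p + q + 0 \<le> 2 * ?N" using assms by auto
    from integrable_iota_mono[OF this] show "integrable (iota ?N) (\<lambda>\<xi>. \<xi> ^ (p + q))" by simp
  qed auto
  also have "\<dots> = (\<Sum>p\<le>\<mu> - k. \<Sum>q\<le>\<nu> - k. ?b p q * (if p = 0 \<and> q = 0 then 1 else 0))"
  proof (intro sum.cong refl)
    fix p q assume "p \<in> {..\<mu> - k}" "q \<in> {..\<nu> - k}"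
    then have "p + q + 0 \<le> 2 * ?N" using assms by auto
    from moment[OF this] have "(LINT \<xi>|iota ?N. \<xi> ^ (p + q)) = mom ?N (p + q) 0" by simp
    then show "(LINT \<xi>|iota ?N. ?b p q * \<xi> ^ (p + q)) = ?b p q * (if p = 0 \<and> q = 0 then 1 else 0)"
      by (simp add: mom_def)
  qed
  also have "\<dots> = (\<Sum>p\<le>\<mu> - k. if p = 0 then ?b 0 0 else 0)"
  proof (intro sum.cong refl)
    fix p
    show "(\<Sum>q\<le>\<nu> - k. ?b p q * (if p = 0 \<and> q = 0 then 1 else 0)) = (if p = 0 then ?b 0 0 else 0)"
    proof -
      have m: "(x::complex) * (if P then 1 else 0) = (if P then x else 0)" for x P by simp
      show ?thesis by (cases "p = 0") (simp_all add: sum.delta m)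
    qed
  qed
  also have "\<dots> = ?b 0 0" by (simp add: sum.delta)
  also have "\<dots> = Acoef \<mu> \<nu> k F 0 0" by simp
  finally show ?thesis .
qed

definition c0 :: "nat \<Rightarrow> nat \<Rightarrow> nat \<Rightarrow> complex" where
  "c0 k i j = (if i + j = k then of_nat (k choose i) * (-1) ^ j else 0)"

lemma inner_delta:
  fixes X :: "nat \<Rightarrow> complex"
  assumes "k \<le> \<nu>"
  shows "(\<Sum>j\<le>\<nu>. if i + j = k then X j else 0) = (if i \<in> {..k} then X (k - i) else 0)"
proof -
  have "(\<Sum>j\<le>\<nu>. if i + j = k then X j else 0) = (\<Sum>j\<le>\<nu>. if j = k - i then (if i \<in> {..k} then X j else 0) else 0)"
    by (intro sum.cong refl) auto
  also have "\<dots> = (if i \<in> {..k} then X (k - i) else 0)"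
    using assms by (auto simp: sum.delta)
  finally show ?thesis .
qed

lemma outer_restrict:
  fixes X :: "nat \<Rightarrow> complex"
  assumes "k \<le> \<mu>"
  shows "(\<Sum>i\<le>\<mu>. if i \<in> {..k} then X i else 0) = (\<Sum>i\<le>k. X i)"
proof -
  have "(\<Sum>i\<le>\<mu>. if i \<in> {..k} then X i else 0) = (\<Sum>i\<in>{..\<mu>} \<inter> {..k}. X i)"
    by (rule sum.inter_restrict[symmetric]) simp
  also have "{..\<mu>} \<inter> {..k} = {..k}" using assms by auto
  finally show ?thesis .
qed

lemma G0_expand:
  assumes "k \<le> \<mu>" "k \<le> \<nu>"
  shows "(\<lambda>(z, w). (z - w) ^ k) = (\<lambda>(z, w). \<Sum>i\<le>\<mu>. \<Sum>j\<le>\<nu>. c0 k i j * z ^ i * w ^ j)"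
proof (intro ext)
  fix p :: "complex \<times> complex"
  obtain z w where p: "p = (z, w)" by (cases p)
  have "(\<Sum>i\<le>\<mu>. \<Sum>j\<le>\<nu>. c0 k i j * z ^ i * w ^ j)
      = (\<Sum>i\<le>\<mu>. \<Sum>j\<le>\<nu>. if i + j = k then of_nat (k choose i) * (-1) ^ j * z ^ i * w ^ j else 0)"
    by (intro sum.cong refl) (simp add: c0_def)
  also have "\<dots> = (\<Sum>i\<le>\<mu>. if i \<in> {..k} then of_nat (k choose i) * (-1) ^ (k - i) * z ^ i * w ^ (k - i) else 0)"
    by (intro sum.cong refl inner_delta[OF assms(2)])
  also have "\<dots> = (\<Sum>i\<le>k. of_nat (k choose i) * (-1) ^ (k - i) * z ^ i * w ^ (k - i))"
    by (rule outer_restrict[OF assms(1)])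
  also have "\<dots> = (z - w) ^ k" unfolding binomD by (simp add: mult_ac)
  finally show "(\<lambda>(z, w). (z - w) ^ k) p = (\<lambda>(z, w). \<Sum>i\<le>\<mu>. \<Sum>j\<le>\<nu>. c0 k i j * z ^ i * w ^ j) p"
    by (simp add: p)
qed

lemma G0_Tspace:
  assumes "k \<le> \<mu>" "k \<le> \<nu>"
  shows "(\<lambda>(z, w). (z - w) ^ k) \<in> Tspace \<mu> \<nu>"
  unfolding Tspace_def G0_expand[OF assms] by blast

lemma existence:
  assumes "k \<le> \<mu>" "k \<le> \<nu>" "F \<in> Tspace \<mu> \<nu>"
  shows "innerH (\<mu> + \<nu> - 2 * k) (Jk \<mu> \<nu> k F) (\<lambda>_. 1) = innerT \<mu> \<nu> F (\<lambda>(z, w). (z - w) ^ k)"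
proof -
  obtain c where F: "F = (\<lambda>(z, w). \<Sum>i\<le>\<mu>. \<Sum>j\<le>\<nu>. c i j * z ^ i * w ^ j)"
    using assms(3) unfolding Tspace_def by blast
  have "innerH (\<mu> + \<nu> - 2 * k) (Jk \<mu> \<nu> k F) (\<lambda>_. 1) = Acoef \<mu> \<nu> k F 0 0"
    by (rule innerH_Jk[OF assms(1,2) F])
  also have "\<dots> = innerT \<mu> \<nu> F (\<lambda>(z, w). (z - w) ^ k)"
    unfolding Acoef_def innerT_def
    by (intro Bochner_Integration.integral_cong refl) (auto split: prod.splits)
  finally show ?thesis .
qed

definition ed :: "nat \<Rightarrow> nat \<Rightarrow> nat \<Rightarrow> nat \<Rightarrow> complex" where
  "ed a b i j = (if i = a \<and> j = b then 1 else 0)"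

lemma innerT_delta:
  assumes "a \<le> \<mu>" "b \<le> \<nu>"
  shows "innerT \<mu> \<nu> (\<lambda>(z, w). \<Sum>i\<le>\<mu>. \<Sum>j\<le>\<nu>. ed a b i j * z ^ i * w ^ j) (\<lambda>(z, w). \<Sum>i\<le>\<mu>. \<Sum>j\<le>\<nu>. d i j * z ^ i * w ^ j)
    = cnj (d a b) * mom \<mu> a a * mom \<nu> b b"
proof -
  let ?V = "cnj (d a b) * mom \<mu> a a * mom \<nu> b b"
  have "innerT \<mu> \<nu> (\<lambda>(z, w). \<Sum>i\<le>\<mu>. \<Sum>j\<le>\<nu>. ed a b i j * z ^ i * w ^ j) (\<lambda>(z, w). \<Sum>i\<le>\<mu>. \<Sum>j\<le>\<nu>. d i j * z ^ i * w ^ j)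
      = (\<Sum>i\<le>\<mu>. \<Sum>j\<le>\<nu>. ed a b i j * cnj (d i j) * mom \<mu> i i * mom \<nu> j j)"
    by (rule parseval)
  also have "\<dots> = (\<Sum>i\<le>\<mu>. \<Sum>j\<le>\<nu>. if i = a then (if j = b then ?V else 0) else 0)"
    by (intro sum.cong refl) (auto simp: ed_def)
  also have "\<dots> = (\<Sum>i\<le>\<mu>. if i = a then ?V else 0)"
    using assms by (intro sum.cong refl) (auto simp: sum.delta)
  also have "\<dots> = ?V" using assms by (simp add: sum.delta)
  finally show ?thesis .
qed

lemma mom_nz: "a \<le> \<tau> \<Longrightarrow> mom \<tau> a a \<noteq> 0"
  by (simp add: mom_def)

lemma uniqueness:
  assumes "k \<le> \<mu>" "k \<le> \<nu>" "G \<in> Tspace \<mu> \<nu>"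
    and eq: "\<And>F. F \<in> Tspace \<mu> \<nu> \<Longrightarrow> innerT \<mu> \<nu> F G = innerT \<mu> \<nu> F (\<lambda>(z, w). (z - w) ^ k)"
  shows "G = (\<lambda>(z, w). (z - w) ^ k)"
proof -
  obtain d where G: "G = (\<lambda>(z, w). \<Sum>i\<le>\<mu>. \<Sum>j\<le>\<nu>. d i j * z ^ i * w ^ j)"
    using assms(3) unfolding Tspace_def by blast
  have coef: "d a b = c0 k a b" if ab: "a \<le> \<mu>" "b \<le> \<nu>" for a b
  proof -
    let ?F = "(\<lambda>(z, w). \<Sum>i\<le>\<mu>. \<Sum>j\<le>\<nu>. ed a b i j * z ^ i * w ^ j) :: complex \<times> complex \<Rightarrow> complex"
    have "?F \<in> Tspace \<mu> \<nu>" unfolding Tspace_def by blast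
    from eq[OF this] have "cnj (d a b) * mom \<mu> a a * mom \<nu> b b = cnj (c0 k a b) * mom \<mu> a a * mom \<nu> b b"
      unfolding G G0_expand[OF assms(1,2)] innerT_delta[OF ab] .
    then have "cnj (d a b) = cnj (c0 k a b)" using mom_nz[OF ab(1)] mom_nz[OF ab(2)] by simp
    then show ?thesis by simp
  qed
  show ?thesis unfolding G G0_expand[OF assms(1,2)]
    by (intro ext) (auto intro!: sum.cong simp: coef split: prod.splits)
qed

lemma adjoint:
  assumes "k \<le> \<mu>" "k \<le> \<nu>"
  shows "Jk_adj \<mu> \<nu> k (\<lambda>_. 1) = (\<lambda>(z, w). (z - w) ^ k)"
  unfolding Jk_adj_def
proof (rule the_equality)
  show "(\<lambda>(z, w). (z - w) ^ k) \<in> Tspace \<mu> \<nu> \<and>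
    (\<forall>F\<in>Tspace \<mu> \<nu>. innerH (\<mu> + \<nu> - 2 * k) (Jk \<mu> \<nu> k F) (\<lambda>_. 1) = innerT \<mu> \<nu> F (\<lambda>(z, w). (z - w) ^ k))"
    using G0_Tspace[OF assms] existence[OF assms] by blast
  fix G assume G: "G \<in> Tspace \<mu> \<nu> \<and> (\<forall>F\<in>Tspace \<mu> \<nu>. innerH (\<mu> + \<nu> - 2 * k) (Jk \<mu> \<nu> k F) (\<lambda>_. 1) = innerT \<mu> \<nu> F G)"
  show "G = (\<lambda>(z, w). (z - w) ^ k)"
  proof (rule uniqueness[OF assms])
    show "G \<in> Tspace \<mu> \<nu>" using G by blast
    fix F assume "F \<in> Tspace \<mu> \<nu>"
    then show "innerT \<mu> \<nu> F G = innerT \<mu> \<nu> F (\<lambda>(z, w). (z - w) ^ k)"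
      using G existence[OF assms] by metis
  qed
qed

lemma final_value:
  assumes "k \<le> \<mu>" "k \<le> \<nu>"
  shows "Jk \<mu> \<nu> k (\<lambda>(z, w). (z - w) ^ k) 0
    = (\<Sum>i\<le>k. of_nat ((k choose i)^2) / (of_nat (\<mu> choose i) * of_nat (\<nu> choose (k - i))))"
proof -
  have "Jk \<mu> \<nu> k (\<lambda>(z, w). (z - w) ^ k) 0 = innerT \<mu> \<nu> (\<lambda>(z, w). (z - w) ^ k) (\<lambda>(z, w). (z - w) ^ k)"
    unfolding Jk_def innerT_def
    by (intro Bochner_Integration.integral_cong refl) (auto split: prod.splits)
  also have "\<dots> = (\<Sum>i\<le>\<mu>. \<Sum>j\<le>\<nu>. c0 k i j * cnj (c0 k i j) * mom \<mu> i i * mom \<nu> j j)"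
    unfolding G0_expand[OF assms] by (rule parseval)
  also have "\<dots> = (\<Sum>i\<le>\<mu>. \<Sum>j\<le>\<nu>. if i + j = k then
      of_nat ((k choose i)^2) / (of_nat (\<mu> choose i) * of_nat (\<nu> choose j)) else 0)"
  proof (intro sum.cong refl)
    fix i j
    have "((-1::complex) ^ j) * (-1) ^ j = 1" by (simp add: power_mult_distrib[symmetric])
    then show "c0 k i j * cnj (c0 k i j) * mom \<mu> i i * mom \<nu> j j = (if i + j = k then
      of_nat ((k choose i)^2) / (of_nat (\<mu> choose i) * of_nat (\<nu> choose j)) else 0)"
      by (auto simp: c0_def mom_def power2_eq_square)
  qed
  also have "\<dots> = (\<Sum>i\<le>\<mu>. if i \<in> {..k} then
      of_nat ((k choose i)^2) / (of_nat (\<mu> choose i) * of_nat (\<nu> choose (k - i))) else 0)"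
    by (intro sum.cong refl inner_delta[OF assms(2)])
  also have "\<dots> = (\<Sum>i\<le>k. of_nat ((k choose i)^2) / (of_nat (\<mu> choose i) * of_nat (\<nu> choose (k - i))))"
    by (rule outer_restrict[OF assms(1)])
  finally show ?thesis .
qed

theorem mainTheorem1:
  fixes \<mu> \<nu> k :: nat
  assumes "k \<le> \<mu>" and "\<mu> < \<nu>"
  shows "Jk \<mu> \<nu> k (Jk_adj \<mu> \<nu> k (\<lambda>_. 1)) 0 =
    of_nat (fact k) * pochhammer (of_nat (\<mu> + \<nu> - 2 * k + 2)) k
      / (pochhammer (- of_nat \<nu>) k * pochhammer (- of_nat \<mu>) k)"
proof -
  have k: "k \<le> \<mu>" "k \<le> \<nu>" using assms by auto
  show ?thesis unfolding adjoint[OF k] final_value[OF k] comb_final[OF k] ..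
qed

end
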